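(* Let $(\mathcal G,p)$ be a $1$-closed CPS on the finite set $\Omega$ with $\mathcal G$ closed under unions and nonempty intersections and covering $\Omega$. Then $(\mathcal G,p)$ satisfies certainty reflection if and only if for every state $\omega'$ and every state $\omega$ such that $m(\omega')\subsetneq m(\omega)$, we have $p_{m(\omega)}(m(\omega'))=1$.
   Context: $\Omega$ is a finite set; every subset is an event. A CPS is a pair $(\mathcal G,p)$ where $\mathcal G$ is a family of nonempty subsets of $\Omega$ and $p$ assigns to each $G\in\mathcal G$ a probability measure $p_G$ on $\Omega$ with $p_G(G)=1$ and $p_G(E)=p_G(F)p_F(E)$ whenever $E\subseteq F\subseteq G$, $F,G\in\mathcal G$. Atom: $m(\omega)=\bigcap\{G\in\mathcal G:\omega\in G\}$. $(\mathcal G,p)$ is $1$-closed if every $L\subseteq G$ with $G\in\mathcal G$ and $p_G(L)=1$ belongs to $\mathcal G$. Certainty reflection: for every event $E$, every $q\in[0,1]$ and every $\omega$, $p_{m(\omega)}(E)=q$ implies $p_{m(\omega)}(\{\omega'\in\Omega:p_{m(\omega')}(E)=q\})=1$. *)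

theory Defs
  imports Complex_Main
begin

definition prob_measure_on :: "'a set \<Rightarrow> ('a set \<Rightarrow> real) \<Rightarrow> bool" where
  "prob_measure_on Omega mu \<longleftrightarrow>
     (\<forall>E. E \<subseteq> Omega \<longrightarrow> 0 \<le> mu E) \<and> mu Omega = 1 \<and>
     (\<forall>E F. E \<subseteq> Omega \<longrightarrow> F \<subseteq> Omega \<longrightarrow> E \<inter> F = {} \<longrightarrow> mu (E \<union> F) = mu E + mu F)"

definition CPS :: "'a set \<Rightarrow> 'a set set \<Rightarrow> ('a set \<Rightarrow> 'a set \<Rightarrow> real) \<Rightarrow> bool" where
  "CPS Omega \<G> p \<longleftrightarrow>
     (\<forall>G\<in>\<G>. G \<noteq> {} \<and> G \<subseteq> Omega) \<and>
     (\<forall>G\<in>\<G>. prob_measure_on Omega (p G) \<and> p G G = 1) \<and>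
     (\<forall>E F G. E \<subseteq> F \<longrightarrow> F \<subseteq> G \<longrightarrow> F \<in> \<G> \<longrightarrow> G \<in> \<G> \<longrightarrow> p G E = p G F * p F E)"

definition atom :: "'a set set \<Rightarrow> 'a \<Rightarrow> 'a set" where
  "atom \<G> \<omega> = \<Inter>{G \<in> \<G>. \<omega> \<in> G}"

definition one_closed :: "'a set set \<Rightarrow> ('a set \<Rightarrow> 'a set \<Rightarrow> real) \<Rightarrow> bool" where
  "one_closed \<G> p \<longleftrightarrow> (\<forall>G\<in>\<G>. \<forall>L. L \<subseteq> G \<longrightarrow> p G L = 1 \<longrightarrow> L \<in> \<G>)"

definition certainty_reflection :: "'a set \<Rightarrow> 'a set set \<Rightarrow> ('a set \<Rightarrow> 'a set \<Rightarrow> real) \<Rightarrow> bool" where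
  "certainty_reflection Omega \<G> p \<longleftrightarrow>
     (\<forall>E q \<omega>. E \<subseteq> Omega \<longrightarrow> \<omega> \<in> Omega \<longrightarrow> p (atom \<G> \<omega>) E = q \<longrightarrow>
        p (atom \<G> \<omega>) {\<omega>' \<in> Omega. p (atom \<G> \<omega>') E = q} = 1)"

end

theory Submission
  imports Defs
begin

lemma pm_mono:
  assumes "prob_measure_on Omega mu" "A \<subseteq> B" "B \<subseteq> Omega"
  shows "mu A \<le> mu B"
proof -
  have a: "\<And>A B. A \<subseteq> Omega \<Longrightarrow> B \<subseteq> Omega \<Longrightarrow> A \<inter> B = {} \<Longrightarrow> mu (A \<union> B) = mu A + mu B"
    and nn: "\<And>A. A \<subseteq> Omega \<Longrightarrow> 0 \<le> mu A"
    using assms(1) unfolding prob_measure_on_def by auto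
  have e: "B = A \<union> (B - A)" using assms by blast
  have "mu (A \<union> (B - A)) = mu A + mu (B - A)" 
    by (rule a) (use assms in auto)
  hence "mu B = mu A + mu (B - A)" using e by simp
  moreover have "0 \<le> mu (B - A)" by (rule nn) (use assms(3) in blast)
  ultimately show ?thesis by simp
qed

lemma pm_le1:
  assumes "prob_measure_on Omega mu" "A \<subseteq> Omega"
  shows "mu A \<le> 1"
  using pm_mono[OF assms(1) assms(2) order_refl] assms(1) unfolding prob_measure_on_def by simp

lemma pm_cond1:
  assumes "prob_measure_on Omega mu" "F \<subseteq> Omega" "E \<subseteq> Omega" "mu F = 1"
  shows "mu E = mu (E \<inter> F)"
proof -
  have a: "\<And>A B. A \<subseteq> Omega \<Longrightarrow> B \<subseteq> Omega \<Longrightarrow> A \<inter> B = {} \<Longrightarrow> mu (A \<union> B) = mu A + mu B"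
    and nn: "\<And>A. A \<subseteq> Omega \<Longrightarrow> 0 \<le> mu A" and om: "mu Omega = 1"
    using assms(1) unfolding prob_measure_on_def by auto
  have e1: "Omega = F \<union> (Omega - F)" using assms by blast
  have "mu (F \<union> (Omega - F)) = mu F + mu (Omega - F)" by (rule a) (use assms in auto)
  hence "mu Omega = mu F + mu (Omega - F)" using e1 by simp
  hence z: "mu (Omega - F) = 0" using om assms by simp
  have "mu (E - F) \<le> mu (Omega - F)" using pm_mono[OF assms(1), of "E - F" "Omega - F"] assms by blast
  moreover have "0 \<le> mu (E - F)" by (rule nn) (use assms in blast)
  ultimately have "mu (E - F) = 0" using z by linarith
  moreover have e2: "E = (E \<inter> F) \<union> (E - F)" by blast
  have "mu ((E \<inter> F) \<union> (E - F)) = mu (E \<inter> F) + mu (E - F)" by (rule a) (use assms in auto)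
  hence "mu E = mu (E \<inter> F) + mu (E - F)" using e2 by simp
  ultimately show ?thesis by simp
qed

lemma inter_closed:
  assumes "\<And>G H. G \<in> \<G> \<Longrightarrow> H \<in> \<G> \<Longrightarrow> G \<inter> H \<noteq> {} \<Longrightarrow> G \<inter> H \<in> \<G>"
    and "finite S" "S \<noteq> {}" "S \<subseteq> \<G>" "\<forall>G\<in>S. w \<in> G"
  shows "\<Inter>S \<in> \<G> \<and> w \<in> \<Inter>S"
  using assms(2-5)
proof (induction S rule: finite_ne_induct)
  case (singleton x) then show ?case by auto
next
  case (insert x F)
  then show ?case using assms(1)[of x "\<Inter>F"] by auto
qed

theorem theorem5:
  fixes Omega :: "'a set" and \<G> :: "'a set set" and p :: "'a set \<Rightarrow> 'a set \<Rightarrow> real"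
  assumes "finite Omega"
    and "CPS Omega \<G> p"
    and "one_closed \<G> p"
    and "\<And>G H. G \<in> \<G> \<Longrightarrow> H \<in> \<G> \<Longrightarrow> G \<union> H \<in> \<G>"
    and "\<And>G H. G \<in> \<G> \<Longrightarrow> H \<in> \<G> \<Longrightarrow> G \<inter> H \<noteq> {} \<Longrightarrow> G \<inter> H \<in> \<G>"
    and "\<Union>\<G> = Omega"
  shows "certainty_reflection Omega \<G> p \<longleftrightarrow>
    (\<forall>\<omega>'\<in>Omega. \<forall>\<omega>\<in>Omega. atom \<G> \<omega>' \<subset> atom \<G> \<omega> \<longrightarrow> p (atom \<G> \<omega>) (atom \<G> \<omega>') = 1)"
proof -
  have sub: "\<And>G. G \<in> \<G> \<Longrightarrow> G \<subseteq> Omega" and pm: "\<And>G. G \<in> \<G> \<Longrightarrow> prob_measure_on Omega (p G)"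
    and pGG: "\<And>G. G \<in> \<G> \<Longrightarrow> p G G = 1"
    and ch: "\<And>E F G. E \<subseteq> F \<Longrightarrow> F \<subseteq> G \<Longrightarrow> F \<in> \<G> \<Longrightarrow> G \<in> \<G> \<Longrightarrow> p G E = p G F * p F E"
  proof -
    have c: "(\<forall>G\<in>\<G>. G \<noteq> {} \<and> G \<subseteq> Omega) \<and>
     (\<forall>G\<in>\<G>. prob_measure_on Omega (p G) \<and> p G G = 1) \<and>
     (\<forall>E F G. E \<subseteq> F \<longrightarrow> F \<subseteq> G \<longrightarrow> F \<in> \<G> \<longrightarrow> G \<in> \<G> \<longrightarrow> p G E = p G F * p F E)"
      using assms(2) unfolding CPS_def .
    show "\<And>G. G \<in> \<G> \<Longrightarrow> G \<subseteq> Omega" using c by simp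
    show "\<And>G. G \<in> \<G> \<Longrightarrow> prob_measure_on Omega (p G)" using c by simp
    show "\<And>G. G \<in> \<G> \<Longrightarrow> p G G = 1" using c by simp
    show "\<And>E F G. E \<subseteq> F \<Longrightarrow> F \<subseteq> G \<Longrightarrow> F \<in> \<G> \<Longrightarrow> G \<in> \<G> \<Longrightarrow> p G E = p G F * p F E"
      using c[THEN conjunct2, THEN conjunct2, rule_format] by assumption
  qed
  have finG: "finite \<G>" proof -
    have "\<G> \<subseteq> Pow Omega" using sub by blast
    thus ?thesis using assms(1) by (simp add: finite_subset)
  qed
  have at: "atom \<G> w \<in> \<G> \<and> w \<in> atom \<G> w" if "w \<in> Omega" for w
  proof -
    have ne: "{G \<in> \<G>. w \<in> G} \<noteq> {}" using that assms(6) by blast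
    have fs: "finite {G \<in> \<G>. w \<in> G}" using finG by simp
    have r: "\<Inter>{G \<in> \<G>. w \<in> G} \<in> \<G> \<and> w \<in> \<Inter>{G \<in> \<G>. w \<in> G}"
      by (rule inter_closed[OF assms(5) fs ne]) auto
    show ?thesis unfolding atom_def using r .
  qed
  have atle: "atom \<G> w \<subseteq> G" if "G \<in> \<G>" "w \<in> G" for w G
    using that unfolding atom_def by blast
  show ?thesis
  proof
    assume cr: "certainty_reflection Omega \<G> p"
    show "\<forall>\<omega>'\<in>Omega. \<forall>\<omega>\<in>Omega. atom \<G> \<omega>' \<subset> atom \<G> \<omega> \<longrightarrow> p (atom \<G> \<omega>) (atom \<G> \<omega>') = 1"
    proof (intro ballI impI)
      fix w' w assume w': "w' \<in> Omega" and w: "w \<in> Omega" and lt: "atom \<G> w' \<subset> atom \<G> w"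
      define M where "M = atom \<G> w"
      define F where "F = atom \<G> w'"
      define q where "q = p M F"
      define L where "L = {x \<in> Omega. p (atom \<G> x) F = q}"
      have MG: "M \<in> \<G>" "w \<in> M" using at[OF w] M_def by auto
      have FG: "F \<in> \<G>" "w' \<in> F" using at[OF w'] F_def by auto
      have FO: "F \<subseteq> Omega" using sub FG by blast
      have "p M L = 1" using cr[unfolded certainty_reflection_def, rule_format, OF FO w, of q] unfolding L_def q_def M_def by simp
      hence "p M (L \<inter> M) = 1" using pm_cond1[OF pm[OF MG(1)], of M L] sub MG pGG L_def by auto
      hence "L \<inter> M \<in> \<G>" using assms(3) MG unfolding one_closed_def by blast
      moreover have "w \<in> L" unfolding L_def q_def M_def using w by simp
      ultimately have "M \<subseteq> L \<inter> M" using atle[of "L \<inter> M" w] MG M_def by blast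
      moreover have "w' \<in> M" using lt FG F_def M_def by blast
      ultimately have "w' \<in> L" by blast
      hence "p F F = q" unfolding L_def F_def by simp
      thus "p (atom \<G> w) (atom \<G> w') = 1" using pGG FG q_def M_def F_def by simp
    qed
  next
    assume h: "\<forall>\<omega>'\<in>Omega. \<forall>\<omega>\<in>Omega. atom \<G> \<omega>' \<subset> atom \<G> \<omega> \<longrightarrow> p (atom \<G> \<omega>) (atom \<G> \<omega>') = 1"
    show "certainty_reflection Omega \<G> p" unfolding certainty_reflection_def
    proof (intro allI impI)
      fix E q w assume E: "E \<subseteq> Omega" and w: "w \<in> Omega" and q: "p (atom \<G> w) E = q"
      define M where "M = atom \<G> w"
      define L where "L = {x \<in> Omega. p (atom \<G> x) E = q}"
      have MG: "M \<in> \<G>" "w \<in> M" using at[OF w] M_def by auto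
      have MO: "M \<subseteq> Omega" using sub MG by blast
      have "M \<subseteq> L"
      proof
        fix x assume xM: "x \<in> M"
        hence xO: "x \<in> Omega" using MO by blast
        define F where "F = atom \<G> x"
        have FG: "F \<in> \<G>" "x \<in> F" using at[OF xO] F_def by auto
        have FO: "F \<subseteq> Omega" using sub FG by blast
        have FM: "F \<subseteq> M" using atle[OF MG(1) xM] F_def by simp
        have "p F E = q"
        proof (cases "F = M")
          case True then show ?thesis using q M_def by simp
        next
          case False
          hence "F \<subset> M" using FM by blast
          hence "p M F = 1" using h xO w unfolding F_def M_def by blast
          hence "p M E = p M (E \<inter> F)" using pm_cond1[OF pm[OF MG(1)] FO E] by simp
          also have "\<dots> = p M F * p F (E \<inter> F)" using ch[of "E \<inter> F" F M] FM FG MG by blast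
          also have "\<dots> = p F (E \<inter> F)" using \<open>p M F = 1\<close> by simp
          also have "\<dots> = p F E" using pm_cond1[OF pm[OF FG(1)] FO E] pGG FG by simp
          finally show ?thesis using q M_def by simp
        qed
        thus "x \<in> L" unfolding L_def F_def using xO by simp
      qed
      have LO: "L \<subseteq> Omega" unfolding L_def by blast
      have "p M M \<le> p M L" using pm_mono[OF pm[OF MG(1)] \<open>M \<subseteq> L\<close> LO] .
      moreover have "p M L \<le> 1" using pm_le1[OF pm[OF MG(1)] LO] .
      ultimately show "p (atom \<G> w) {\<omega>' \<in> Omega. p (atom \<G> \<omega>') E = q} = 1"
        using pGG MG unfolding M_def L_def by simp
    qed
  qed
qed

end
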